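(* Let $V\subset\mathbb{R}^d$ be the closure of a bounded domain, let $\rho_t=h(t)\delta_{\gamma(t)}\in\mathcal{H}_V$ and let $b\in C^1(V)$. Then $t\mapsto h(t)b(\gamma(t))$ (set equal to $0$ where $h(t)=0$) belongs to ${\rm AC}^2[0,1]$, and for a.e. $t\in(0,1)$ $$\big(h(t)b(\gamma(t))\big)'=\dot h(t)\,b(\gamma(t))+h(t)\nabla b(\gamma(t))\cdot\dot\gamma(t),$$ where the right-hand side is understood as $0$ at times with $h(t)=0$.
   Context: ${\rm AC}^2$ denotes absolutely continuous functions with a.e. derivative in $L^2$. $\mathscr{S}_V$ is the set of narrowly continuous curves $[0,1]\to\mathcal{M}^+(V)$ with values in $\{h\delta_\gamma:h\ge0,\gamma\in V\}$, written $\rho_t=h(t)\delta_{\gamma(t)}$ ($\gamma$ determined only where $h>0$). $\mathcal{H}_V:=\{\rho\in\mathscr{S}_V: h,\sqrt h\in{\rm AC}^2[0,1],\ \sqrt h\,\gamma\in{\rm AC}^2([0,1];\mathbb{R}^d)\}$, with $\sqrt h\gamma:=0$ on $\{h=0\}$. *)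

theory Defs
  imports "HOL-Analysis.Analysis"
begin

definition AC_on :: "real \<Rightarrow> real \<Rightarrow> (real \<Rightarrow> 'b::real_normed_vector) \<Rightarrow> bool" where
  "AC_on a b f \<longleftrightarrow>
     (\<forall>\<epsilon>>0. \<exists>\<delta>>0. \<forall>(n::nat) (l::nat \<Rightarrow> real) (r::nat \<Rightarrow> real).
        (\<forall>k<n. a \<le> l k \<and> l k \<le> r k \<and> r k \<le> b) \<and>
        disjoint_family_on (\<lambda>k. {l k<..<r k}) {..<n} \<and>
        (\<Sum>k<n. r k - l k) < \<delta>
        \<longrightarrow> (\<Sum>k<n. norm (f (r k) - f (l k))) < \<epsilon>)"

definition AC2 :: "(real \<Rightarrow> 'b::euclidean_space) \<Rightarrow> bool" where
  "AC2 f \<longleftrightarrow> AC_on 0 1 f \<and>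
     (\<exists>g::real \<Rightarrow> 'b. g \<in> borel_measurable lborel \<and>
        integrable (restrict_space lborel {0..1}) (\<lambda>t. (norm (g t))\<^sup>2) \<and>
        (AE t in lborel. t \<in> {0<..<1} \<longrightarrow> (f has_vector_derivative g t) (at t)))"

text \<open>S_V: the curve t \<mapsto> h(t) \<delta>_{\<gamma>(t)} takes values in nonnegative measures on V
  (h t \<ge> 0, \<gamma> t \<in> V where h t > 0) and is narrowly continuous on [0,1], i.e. continuous
  when tested against every bounded continuous function on V.\<close>
definition in_SV :: "'a::euclidean_space set \<Rightarrow> (real \<Rightarrow> real) \<Rightarrow> (real \<Rightarrow> 'a) \<Rightarrow> bool" where
  "in_SV V h \<gamma> \<longleftrightarrow>
     (\<forall>t\<in>{0..1}. 0 \<le> h t \<and> (0 < h t \<longrightarrow> \<gamma> t \<in> V)) \<and>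
     (\<forall>\<phi>::'a \<Rightarrow> real. continuous_on V \<phi> \<and> bounded (\<phi> ` V) \<longrightarrow>
        continuous_on {0..1} (\<lambda>t. h t * \<phi> (\<gamma> t)))"

definition in_HV :: "'a::euclidean_space set \<Rightarrow> (real \<Rightarrow> real) \<Rightarrow> (real \<Rightarrow> 'a) \<Rightarrow> bool" where
  "in_HV V h \<gamma> \<longleftrightarrow> in_SV V h \<gamma> \<and> AC2 h \<and> AC2 (\<lambda>t. sqrt (h t)) \<and>
     AC2 (\<lambda>t. if h t = 0 then 0 else sqrt (h t) *\<^sub>R \<gamma> t)"

end

theory Submission imports Defs "HOL-Analysis.Analysis" begin

lemma AC_on_cont:
  assumes "AC_on 0 1 f"
  shows "continuous_on {0..1} f"
  unfolding continuous_on_iff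
proof (intro ballI allI impI)
  fix x e :: real assume x: "x \<in> {0..1}" and e: "0 < e"
  obtain d where d: "d > 0" and H: "\<forall>(n::nat) (l::nat\<Rightarrow>real) (r::nat\<Rightarrow>real). (\<forall>k<n. 0 \<le> l k \<and> l k \<le> r k \<and> r k \<le> 1) \<and>
        disjoint_family_on (\<lambda>k. {l k<..<r k}) {..<n} \<and> (\<Sum>k<n. r k - l k) < d
        \<longrightarrow> (\<Sum>k<n. norm (f (r k) - f (l k))) < e"
    using assms[unfolded AC_on_def, rule_format, OF e] by (elim exE conjE) (rule that; assumption)
  show "\<exists>d>0. \<forall>x'\<in>{0..1}. dist x' x < d \<longrightarrow> dist (f x') (f x) < e"
  proof (intro exI[of _ d] conjI ballI impI d)
    fix y assume y: "y \<in> {0..1}" "dist y x < d"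
    have "norm (f (max x y) - f (min x y)) < e"
    proof -
      have "min x y \<le> max x y \<and> max x y - min x y < d" using y by (auto simp: dist_real_def)
      then show ?thesis
        using H[rule_format, of 1 "\<lambda>_. min x y" "\<lambda>_. max x y"] x y by (auto simp: disjoint_family_on_def)
    qed
    then show "dist (f y) (f x) < e"
      by (cases "x \<le> y") (auto simp: dist_norm norm_minus_commute max_def min_def)
  qed
qed

lemma AC_on_bound:
  fixes F :: "real \<Rightarrow> real" and f1 f2 :: "real \<Rightarrow> real" and f3 :: "real \<Rightarrow> 'a::real_normed_vector"
  assumes a1: "AC_on 0 1 f1" and a2: "AC_on 0 1 f2" and a3: "AC_on 0 1 f3" and C: "C > 0"
    and B: "\<And>x y. x \<in> {0..1} \<Longrightarrow> y \<in> {0..1} \<Longrightarrow>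
       norm (F x - F y) \<le> C * (norm (f1 x - f1 y) + norm (f2 x - f2 y) + norm (f3 x - f3 y))"
  shows "AC_on 0 1 F"
  unfolding AC_on_def
proof (intro allI impI)
  fix e :: real assume e: "e > 0"
  define e' where "e' = e / (3 * C)"
  have e': "e' > 0" using e C by (simp add: e'_def)
  obtain d1 where d1: "d1 > 0" and H1: "\<forall>(n::nat) (l::nat\<Rightarrow>real) (r::nat\<Rightarrow>real). (\<forall>k<n. 0 \<le> l k \<and> l k \<le> r k \<and> r k \<le> 1) \<and>
        disjoint_family_on (\<lambda>k. {l k<..<r k}) {..<n} \<and> (\<Sum>k<n. r k - l k) < d1
        \<longrightarrow> (\<Sum>k<n. norm (f1 (r k) - f1 (l k))) < e'"
    using a1[unfolded AC_on_def, rule_format, OF e'] by (elim exE conjE) (rule that; assumption)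
  obtain d2 where d2: "d2 > 0" and H2: "\<forall>(n::nat) (l::nat\<Rightarrow>real) (r::nat\<Rightarrow>real). (\<forall>k<n. 0 \<le> l k \<and> l k \<le> r k \<and> r k \<le> 1) \<and>
        disjoint_family_on (\<lambda>k. {l k<..<r k}) {..<n} \<and> (\<Sum>k<n. r k - l k) < d2
        \<longrightarrow> (\<Sum>k<n. norm (f2 (r k) - f2 (l k))) < e'"
    using a2[unfolded AC_on_def, rule_format, OF e'] by (elim exE conjE) (rule that; assumption)
  obtain d3 where d3: "d3 > 0" and H3: "\<forall>(n::nat) (l::nat\<Rightarrow>real) (r::nat\<Rightarrow>real). (\<forall>k<n. 0 \<le> l k \<and> l k \<le> r k \<and> r k \<le> 1) \<and>
        disjoint_family_on (\<lambda>k. {l k<..<r k}) {..<n} \<and> (\<Sum>k<n. r k - l k) < d3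
        \<longrightarrow> (\<Sum>k<n. norm (f3 (r k) - f3 (l k))) < e'"
    using a3[unfolded AC_on_def, rule_format, OF e'] by (elim exE conjE) (rule that; assumption)
  show "\<exists>d>0. \<forall>(n::nat) (l::nat\<Rightarrow>real) (r::nat\<Rightarrow>real). (\<forall>k<n. 0 \<le> l k \<and> l k \<le> r k \<and> r k \<le> 1) \<and>
        disjoint_family_on (\<lambda>k. {l k<..<r k}) {..<n} \<and> (\<Sum>k<n. r k - l k) < d
        \<longrightarrow> (\<Sum>k<n. norm (F (r k) - F (l k))) < e"
  proof (intro exI[of _ "min d1 (min d2 d3)"] conjI allI impI)
    show "min d1 (min d2 d3) > 0" using d1 d2 d3 by simp
    fix n :: nat and l r :: "nat \<Rightarrow> real" assume P: "(\<forall>k<n. 0 \<le> l k \<and> l k \<le> r k \<and> r k \<le> 1) \<and>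
        disjoint_family_on (\<lambda>k. {l k<..<r k}) {..<n} \<and> (\<Sum>k<n. r k - l k) < min d1 (min d2 d3)"
    have s1: "(\<Sum>k<n. norm (f1 (r k) - f1 (l k))) < e'" by (rule H1[rule_format]) (use P in auto)
    have s2: "(\<Sum>k<n. norm (f2 (r k) - f2 (l k))) < e'" by (rule H2[rule_format]) (use P in auto)
    have s3: "(\<Sum>k<n. norm (f3 (r k) - f3 (l k))) < e'" by (rule H3[rule_format]) (use P in auto)
    have "(\<Sum>k<n. norm (F (r k) - F (l k))) \<le>
       (\<Sum>k<n. C * (norm (f1 (r k) - f1 (l k)) + norm (f2 (r k) - f2 (l k)) + norm (f3 (r k) - f3 (l k))))"
      by (rule sum_mono, rule B) (use P in auto)
    also have "\<dots> = C * ((\<Sum>k<n. norm (f1 (r k) - f1 (l k))) + (\<Sum>k<n. norm (f2 (r k) - f2 (l k)))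
        + (\<Sum>k<n. norm (f3 (r k) - f3 (l k))))"
      by (simp add: sum.distrib distrib_left sum_distrib_left)
    also have "\<dots> < C * (e' + e' + e')"
      using s1 s2 s3 C by (intro mult_strict_left_mono) auto
    also have "\<dots> = e" using C by (simp add: e'_def)
    finally show "(\<Sum>k<n. norm (F (r k) - F (l k))) < e" .
  qed
qed

lemma C1_lipschitz_compact:
  fixes b :: "'a::euclidean_space \<Rightarrow> real"
  assumes "compact V" "open W" "V \<subseteq> W"
    and bd: "\<And>x. x \<in> W \<Longrightarrow> (b has_derivative (\<lambda>v. Db x \<bullet> v)) (at x)"
    and cD: "continuous_on W Db"
  obtains L where "L-lipschitz_on V b"
proof -
  have ll: "local_lipschitz {0::real} V (\<lambda>_. b)"
  proof (rule local_lipschitzI)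
    fix t x assume "t \<in> {0::real}" "x \<in> V"
    obtain u where u: "u > 0" "cball x u \<subseteq> W"
      using \<open>open W\<close> \<open>V \<subseteq> W\<close> \<open>x \<in> V\<close> open_contains_cball by blast
    have "compact (Db ` cball x u)"
      by (rule compact_continuous_image) (use continuous_on_subset[OF cD u(2)] in auto)
    then obtain B where B: "B > 0" "\<And>y. y \<in> cball x u \<Longrightarrow> norm (Db y) \<le> B"
      by (auto dest!: compact_imp_bounded simp: bounded_pos)
    have "B-lipschitz_on (cball x u) b"
    proof (rule bounded_derivative_imp_lipschitz)
      show "\<And>y. y \<in> cball x u \<Longrightarrow> (b has_derivative (\<lambda>v. Db y \<bullet> v)) (at y within cball x u)"
        using bd u(2) has_derivative_at_withinI by blast
      show "\<And>y. y \<in> cball x u \<Longrightarrow> onorm (\<lambda>v. Db y \<bullet> v) \<le> B"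
      proof -
        fix y assume y: "y \<in> cball x u"
        show "onorm (\<lambda>v. Db y \<bullet> v) \<le> B"
        proof (rule onorm_bound)
          fix v show "norm (Db y \<bullet> v) \<le> B * norm v"
            using Cauchy_Schwarz_ineq2[of "Db y" v] B(2)[OF y]
            by (metis norm_ge_zero mult_right_mono order_trans real_norm_def)
        qed (use B in auto)
      qed
    qed (use B in auto)
    then show "\<exists>u>0. \<exists>L. \<forall>t\<in>cball t u \<inter> {0}. L-lipschitz_on (cball x u \<inter> V) b"
      using u by (meson inf_le1 lipschitz_on_subset)
  qed
  obtain L where "\<And>t. t \<in> {0::real} \<Longrightarrow> L-lipschitz_on V b"
    using local_lipschitz_compact_implies_lipschitz[OF ll \<open>compact V\<close> compact_sing] by auto
  then show ?thesis using that by blast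
qed


lemma pointwise_deriv:
  fixes \<gamma> :: "real \<Rightarrow> 'a::euclidean_space" and b :: "'a \<Rightarrow> real"
  assumes t: "0 < t" "t < 1"
    and hnn: "\<forall>x\<in>{0..1}. 0 \<le> h x"
    and hV: "\<forall>x\<in>{0..1}. 0 < h x \<longrightarrow> \<gamma> x \<in> V"
    and VW: "V \<subseteq> W"
    and bd: "\<And>x. x \<in> W \<Longrightarrow> (b has_derivative (\<lambda>v. Db x \<bullet> v)) (at x)"
    and Mb: "\<forall>x\<in>V. \<bar>b x\<bar> \<le> Mb" and Mb0: "0 \<le> Mb"
    and dh: "(h has_real_derivative gh) (at t)"
    and ds: "((\<lambda>x. sqrt (h x)) has_real_derivative gs) (at t)"
    and dw: "((\<lambda>x. if h x = 0 then 0 else sqrt (h x) *\<^sub>R \<gamma> x) has_vector_derivative gw) (at t)"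
  shows "(h t \<noteq> 0 \<longrightarrow> (\<gamma> has_vector_derivative ((1 / sqrt (h t)) *\<^sub>R (gw - gs *\<^sub>R \<gamma> t))) (at t))
    \<and> ((\<lambda>x. if h x = 0 then 0 else h x * b (\<gamma> x)) has_real_derivative
        (if h t = 0 then 0 else gh * b (\<gamma> t) + sqrt (h t) * (Db (\<gamma> t) \<bullet> (gw - gs *\<^sub>R \<gamma> t)))) (at t)"
proof (cases "h t = 0")
  case True
  have gh0: "gh = 0"
  proof (rule DERIV_local_min[OF dh])
    show "0 < min t (1 - t)" using t by simp
    show "\<forall>y. \<bar>t - y\<bar> < min t (1 - t) \<longrightarrow> h t \<le> h y"
      using hnn True by (auto simp: abs_if split: if_splits)
  qed
  define F where "F = (\<lambda>x. if h x = 0 then 0 else h x * b (\<gamma> x))"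
  have "(F has_real_derivative 0) (at t)"
    unfolding has_field_derivative_iff
  proof (rule Lim_null_comparison)
    have "((\<lambda>y. (h y - h t) / (y - t)) \<longlongrightarrow> gh) (at t)"
      using dh unfolding has_field_derivative_iff .
    then have "((\<lambda>y. Mb * \<bar>(h y - h t) / (y - t)\<bar>) \<longlongrightarrow> Mb * \<bar>0\<bar>) (at t)"
      using gh0 by (intro tendsto_intros) auto
    then show "((\<lambda>y. Mb * \<bar>(h y - h t) / (y - t)\<bar>) \<longlongrightarrow> 0) (at t)" by simp
    show "\<forall>\<^sub>F y in at t. norm ((F y - F t) / (y - t)) \<le> Mb * \<bar>(h y - h t) / (y - t)\<bar>"
      unfolding eventually_at
    proof (intro exI[of _ "min t (1 - t)"] conjI ballI impI)
      show "0 < min t (1 - t)" using t by simp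
      fix y :: real assume y: "y \<noteq> t \<and> dist y t < min t (1 - t)"
      then have y01: "y \<in> {0..1}" by (auto simp: dist_real_def abs_if split: if_splits)
      show "norm ((F y - F t) / (y - t)) \<le> Mb * \<bar>(h y - h t) / (y - t)\<bar>"
      proof (cases "h y = 0")
        case True then show ?thesis using Mb0 \<open>h t = 0\<close> by (simp add: F_def)
      next
        case False
        then have hy: "h y > 0" using hnn y01 by force
        then have "\<bar>b (\<gamma> y)\<bar> \<le> Mb" using hV Mb y01 by blast
        then have "\<bar>h y * b (\<gamma> y)\<bar> \<le> Mb * \<bar>h y\<bar>"
          using hy by (simp add: abs_mult mult.commute mult_left_mono)
        then show ?thesis using False \<open>h t = 0\<close>
          by (simp add: F_def abs_divide divide_right_mono)
      qed
    qed
  qed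
  then show ?thesis using True by (simp add: F_def)
next
  case False
  have t01: "t \<in> {0..1}" using t by auto
  have ht: "h t > 0" using hnn t01 False by force
  have "isCont h t" by (rule DERIV_isCont[OF dh])
  then have "\<forall>\<^sub>F y in at t. 0 < h y"
    using ht unfolding isCont_def by (rule order_tendstoD(1))
  then obtain d where d: "d > 0" and dd: "\<And>y. y \<noteq> t \<Longrightarrow> dist y t < d \<Longrightarrow> 0 < h y"
    unfolding eventually_at by auto
  have dpos: "\<And>y. dist y t < d \<Longrightarrow> 0 < h y" using dd ht by (metis)
  define s where "s = sqrt (h t)"
  have s: "s > 0" using ht by (simp add: s_def)
  define \<gamma>d where "\<gamma>d = (1 / s) *\<^sub>R (gw - gs *\<^sub>R \<gamma> t)"
  have dinv: "((\<lambda>x. inverse (sqrt (h x))) has_real_derivative - (gs * inverse (sqrt (h t) ^ Suc (Suc 0)))) (at t)"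
    by (rule DERIV_inverse_fun[OF ds]) (use ht in simp)
  have dprod: "((\<lambda>x. inverse (sqrt (h x)) *\<^sub>R (if h x = 0 then 0 else sqrt (h x) *\<^sub>R \<gamma> x)) has_vector_derivative
      (inverse (sqrt (h t)) *\<^sub>R gw + (- (gs * inverse (sqrt (h t) ^ Suc (Suc 0)))) *\<^sub>R (if h t = 0 then 0 else sqrt (h t) *\<^sub>R \<gamma> t))) (at t)"
    by (rule has_vector_derivative_scaleR[OF dinv dw])
  have eqd: "inverse (sqrt (h t)) *\<^sub>R gw + (- (gs * inverse (sqrt (h t) ^ Suc (Suc 0)))) *\<^sub>R (if h t = 0 then 0 else sqrt (h t) *\<^sub>R \<gamma> t) = \<gamma>d"
    using s False unfolding \<gamma>d_def s_def[symmetric]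
    by (simp add: scaleR_diff_right scaleR_scaleR field_simps power2_eq_square)
  have dg: "(\<gamma> has_vector_derivative \<gamma>d) (at t)"
  proof (rule has_vector_derivative_transform_within[OF dprod[unfolded eqd] d])
    fix y assume "dist y t < d"
    then have "0 < h y" by (rule dpos)
    then show "inverse (sqrt (h y)) *\<^sub>R (if h y = 0 then 0 else sqrt (h y) *\<^sub>R \<gamma> y) = \<gamma> y"
      by simp
  qed simp
  have gW: "\<gamma> t \<in> W" using hV ht t01 VW by blast
  have db0: "((\<lambda>x. b (\<gamma> x)) has_derivative (\<lambda>x. Db (\<gamma> t) \<bullet> (x *\<^sub>R \<gamma>d))) (at t)"
    by (rule has_derivative_compose[OF dg[unfolded has_vector_derivative_def] bd[OF gW]])
  have feq: "(\<lambda>x. Db (\<gamma> t) \<bullet> (x *\<^sub>R \<gamma>d)) = (*) (Db (\<gamma> t) \<bullet> \<gamma>d)"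
    by (auto simp: fun_eq_iff)
  have db: "((\<lambda>x. b (\<gamma> x)) has_real_derivative (Db (\<gamma> t) \<bullet> \<gamma>d)) (at t)"
    using db0 unfolding feq has_field_derivative_def .
  have dF0: "((\<lambda>x. h x * b (\<gamma> x)) has_real_derivative (gh * b (\<gamma> t) + h t * (Db (\<gamma> t) \<bullet> \<gamma>d))) (at t)"
    using DERIV_mult[OF dh db] by (simp add: mult.commute)
  have dF: "((\<lambda>x. if h x = 0 then 0 else h x * b (\<gamma> x)) has_real_derivative (gh * b (\<gamma> t) + h t * (Db (\<gamma> t) \<bullet> \<gamma>d))) (at t)"
  proof (rule has_field_derivative_transform_within[OF dF0 d])
    fix y assume "dist y t < d"
    then have "0 < h y" by (rule dpos)
    then show "h y * b (\<gamma> y) = (if h y = 0 then 0 else h y * b (\<gamma> y))" by simp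
  qed simp
  have veq: "h t * (Db (\<gamma> t) \<bullet> \<gamma>d) = sqrt (h t) * (Db (\<gamma> t) \<bullet> (gw - gs *\<^sub>R \<gamma> t))"
  proof -
    have "h t = s * s" using ht by (simp add: s_def)
    then show ?thesis using s unfolding \<gamma>d_def s_def[symmetric] by (simp add: inner_scaleR_right)
  qed
  show ?thesis using dg False dF[unfolded veq] unfolding \<gamma>d_def s_def by simp
qed


lemma F_est:
  fixes \<gamma> :: "real \<Rightarrow> 'a::euclidean_space" and b :: "'a \<Rightarrow> real"
  assumes hx: "0 \<le> h x" and hy: "0 \<le> h y"
    and gx: "0 < h x \<longrightarrow> \<gamma> x \<in> V" and gy: "0 < h y \<longrightarrow> \<gamma> y \<in> V"
    and Mb: "\<forall>z\<in>V. \<bar>b z\<bar> \<le> Mb" and R: "\<forall>z\<in>V. norm z \<le> R" and L: "L-lipschitz_on V b"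
    and sx: "sqrt (h x) \<le> Ms" and sy: "sqrt (h y) \<le> Ms"
    and Mb0: "0 \<le> Mb" and R0: "0 \<le> R" and Ms0: "0 \<le> Ms"
  shows "norm ((if h x = 0 then 0 else h x * b (\<gamma> x)) - (if h y = 0 then 0 else h y * b (\<gamma> y)))
    \<le> (Mb + L * Ms * R + L * Ms + 1) *
      (norm (h x - h y) + norm (sqrt (h x) - sqrt (h y)) +
       norm ((if h x = 0 then 0 else sqrt (h x) *\<^sub>R \<gamma> x) - (if h y = 0 then 0 else sqrt (h y) *\<^sub>R \<gamma> y)))"
    (is "?l \<le> ?C * ?A")
proof -
  have L0: "0 \<le> L" using L lipschitz_on_nonneg by blast
  have C1: "Mb \<le> ?C" "L * Ms * R \<le> ?C" "L * Ms \<le> ?C" "0 \<le> ?C"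
    using L0 Mb0 R0 Ms0 by (auto intro!: mult_nonneg_nonneg)
  have A0: "0 \<le> ?A" by simp
  consider "h x = 0" "h y = 0" | "h x > 0" "h y = 0" | "h x = 0" "h y > 0" | "h x > 0" "h y > 0"
    using hx hy by linarith
  then show ?thesis
  proof cases
    case 1 then show ?thesis using C1 A0 by simp
  next
    case 2
    have "\<bar>b (\<gamma> x)\<bar> \<le> Mb" using Mb gx 2 by blast
    then have "?l \<le> Mb * norm (h x - h y)" using 2
      by (simp add: abs_mult mult.commute mult_left_mono)
    also have "\<dots> \<le> ?C * ?A" using C1 A0 Mb0
      by (intro mult_mono) auto
    finally show ?thesis .
  next
    case 3
    have "\<bar>b (\<gamma> y)\<bar> \<le> Mb" using Mb gy 3 by blast
    then have "?l \<le> Mb * norm (h x - h y)" using 3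
      by (simp add: abs_mult mult.commute mult_left_mono)
    also have "\<dots> \<le> ?C * ?A" using C1 A0 Mb0
      by (intro mult_mono) auto
    finally show ?thesis .
  next
    case 4
    define a where "a = sqrt (h x)"
    define c where "c = sqrt (h y)"
    have a0: "a > 0" "h x = a * a" using 4 by (auto simp: a_def)
    have c0: "c > 0" "h y = c * c" using 4 by (auto simp: c_def)
    have gxV: "\<gamma> x \<in> V" and gyV: "\<gamma> y \<in> V" using gx gy 4 by auto
    have bx: "\<bar>b (\<gamma> x)\<bar> \<le> Mb" using Mb gxV by blast
    have lip: "\<bar>b (\<gamma> x) - b (\<gamma> y)\<bar> \<le> L * norm (\<gamma> x - \<gamma> y)"
      using lipschitz_onD[OF L gxV gyV] by (simp add: dist_norm dist_real_def)
    have wdiff: "c *\<^sub>R \<gamma> x - c *\<^sub>R \<gamma> y = (c - a) *\<^sub>R \<gamma> x + (a *\<^sub>R \<gamma> x - c *\<^sub>R \<gamma> y)"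
      by (simp add: algebra_simps)
    have nx: "norm (\<gamma> x) \<le> R" using R gxV by blast
    have "norm (c *\<^sub>R \<gamma> x - c *\<^sub>R \<gamma> y) \<le> \<bar>c - a\<bar> * norm (\<gamma> x) + norm (a *\<^sub>R \<gamma> x - c *\<^sub>R \<gamma> y)"
      unfolding wdiff by (rule order_trans[OF norm_triangle_ineq]) simp
    also have "\<dots> \<le> \<bar>a - c\<bar> * R + norm (a *\<^sub>R \<gamma> x - c *\<^sub>R \<gamma> y)"
      using nx by (simp add: abs_minus_commute mult_left_mono)
    finally have n1: "c * norm (\<gamma> x - \<gamma> y) \<le> \<bar>a - c\<bar> * R + norm (a *\<^sub>R \<gamma> x - c *\<^sub>R \<gamma> y)"
      using c0 by (simp add: scaleR_diff_right[symmetric])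
    have "h y * norm (\<gamma> x - \<gamma> y) = c * (c * norm (\<gamma> x - \<gamma> y))" using c0 by simp
    also have "\<dots> \<le> Ms * (\<bar>a - c\<bar> * R + norm (a *\<^sub>R \<gamma> x - c *\<^sub>R \<gamma> y))"
      using n1 c0 sy unfolding c_def[symmetric]
      by (intro mult_mono) auto
    finally have hyb: "h y * norm (\<gamma> x - \<gamma> y) \<le> Ms * (\<bar>a - c\<bar> * R + norm (a *\<^sub>R \<gamma> x - c *\<^sub>R \<gamma> y))" .
    have eq: "h x * b (\<gamma> x) - h y * b (\<gamma> y) = (h x - h y) * b (\<gamma> x) + h y * (b (\<gamma> x) - b (\<gamma> y))"
      by (simp add: algebra_simps)
    have "?l = \<bar>(h x - h y) * b (\<gamma> x) + h y * (b (\<gamma> x) - b (\<gamma> y))\<bar>" using 4 eq by simp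
    also have "\<dots> \<le> \<bar>h x - h y\<bar> * Mb + h y * (L * norm (\<gamma> x - \<gamma> y))"
      using bx lip hy by (intro order_trans[OF abs_triangle_ineq] add_mono)
        (auto simp: abs_mult intro: mult_left_mono)
    also have "\<dots> = Mb * \<bar>h x - h y\<bar> + L * (h y * norm (\<gamma> x - \<gamma> y))" by (simp add: algebra_simps)
    also have "\<dots> \<le> Mb * \<bar>h x - h y\<bar> + L * (Ms * (\<bar>a - c\<bar> * R + norm (a *\<^sub>R \<gamma> x - c *\<^sub>R \<gamma> y)))"
      using hyb L0 by (intro add_left_mono mult_left_mono) auto
    also have "\<dots> = Mb * \<bar>h x - h y\<bar> + (L * Ms * R) * \<bar>a - c\<bar> + (L * Ms) * norm (a *\<^sub>R \<gamma> x - c *\<^sub>R \<gamma> y)"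
      by (simp add: algebra_simps)
    also have "\<dots> \<le> ?C * \<bar>h x - h y\<bar> + ?C * \<bar>a - c\<bar> + ?C * norm (a *\<^sub>R \<gamma> x - c *\<^sub>R \<gamma> y)"
      using C1 by (intro add_mono mult_right_mono) auto
    also have "\<dots> = ?C * ?A" using 4 unfolding a_def c_def by (simp add: algebra_simps)
    finally show ?thesis .
  qed
qed


lemma sq3: "((a::real) + b + c)\<^sup>2 \<le> 3 * (a\<^sup>2 + b\<^sup>2 + c\<^sup>2)"
proof -
  have "0 \<le> (a - b)\<^sup>2 + (b - c)\<^sup>2 + (a - c)\<^sup>2" by simp
  then show ?thesis by (simp add: power2_eq_square algebra_simps)
qed

theorem lemma3p8:
  fixes U V :: "'a::euclidean_space set"
    and h :: "real \<Rightarrow> real" and \<gamma> :: "real \<Rightarrow> 'a"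
    and b :: "'a \<Rightarrow> real" and Db :: "'a \<Rightarrow> 'a" and W :: "'a set"
  assumes "open U" "connected U" "bounded U" "U \<noteq> {}" "V = closure U"
    and "in_HV V h \<gamma>"
    and "open W" "V \<subseteq> W"
    and "\<And>x. x \<in> W \<Longrightarrow> (b has_derivative (\<lambda>v. Db x \<bullet> v)) (at x)"
    and "continuous_on W Db"
  shows "AC2 (\<lambda>t. if h t = 0 then 0 else h t * b (\<gamma> t))
    \<and> (AE t in lborel. t \<in> {0<..<1} \<longrightarrow>
         (\<exists>hd \<gamma>d. (h has_real_derivative hd) (at t) \<and>
            (h t \<noteq> 0 \<longrightarrow> (\<gamma> has_vector_derivative \<gamma>d) (at t)) \<and>
            ((\<lambda>s. if h s = 0 then 0 else h s * b (\<gamma> s)) has_real_derivative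
               (if h t = 0 then 0 else hd * b (\<gamma> t) + h t * (Db (\<gamma> t) \<bullet> \<gamma>d))) (at t)))"
proof -
  note bd = assms(9)
  define w where "w = (\<lambda>t. if h t = 0 then 0 else sqrt (h t) *\<^sub>R \<gamma> t)"
  define F where "F = (\<lambda>t. if h t = 0 then 0 else h t * b (\<gamma> t))"
  have HV: "in_SV V h \<gamma>" "AC2 h" "AC2 (\<lambda>t. sqrt (h t))" "AC2 w"
    using assms(6) unfolding in_HV_def w_def by auto
  from HV(1) have hnn: "\<forall>x\<in>{0..1}. 0 \<le> h x" and hV: "\<forall>x\<in>{0..1}. 0 < h x \<longrightarrow> \<gamma> x \<in> V"
    unfolding in_SV_def by auto
  obtain gh where gh: "gh \<in> borel_measurable lborel"
    "integrable (restrict_space lborel {0..1}) (\<lambda>t. (norm (gh t))\<^sup>2)"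
    "AE t in lborel. t \<in> {0<..<1} \<longrightarrow> (h has_vector_derivative gh t) (at t)"
    and ACh: "AC_on 0 1 h" using HV(2) unfolding AC2_def by blast
  obtain gs where gs: "gs \<in> borel_measurable lborel"
    "integrable (restrict_space lborel {0..1}) (\<lambda>t. (norm (gs t))\<^sup>2)"
    "AE t in lborel. t \<in> {0<..<1} \<longrightarrow> ((\<lambda>t. sqrt (h t)) has_vector_derivative gs t) (at t)"
    and ACs: "AC_on 0 1 (\<lambda>t. sqrt (h t))" using HV(3) unfolding AC2_def by blast
  obtain gw where gw: "gw \<in> borel_measurable lborel"
    "integrable (restrict_space lborel {0..1}) (\<lambda>t. (norm (gw t))\<^sup>2)"
    "AE t in lborel. t \<in> {0<..<1} \<longrightarrow> (w has_vector_derivative gw t) (at t)"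
    and ACw: "AC_on 0 1 w" using HV(4) unfolding AC2_def by blast
  have cV: "compact V" using assms(3,5) by (simp add: compact_eq_bounded_closed bounded_closure)
  have bcW: "continuous_on W b"
    using assms(7) bd has_derivative_continuous continuous_on_eq_continuous_at by blast
  have bcV: "continuous_on V b" using continuous_on_subset[OF bcW assms(8)] .
  have DcV: "continuous_on V Db" using continuous_on_subset[OF assms(10) assms(8)] .
  obtain Mb where Mb: "Mb > 0" "\<forall>z\<in>V. \<bar>b z\<bar> \<le> Mb"
    using compact_imp_bounded[OF compact_continuous_image[OF bcV cV]]
    by (auto simp: bounded_pos)
  obtain MD where MD: "MD > 0" "\<forall>z\<in>V. norm (Db z) \<le> MD"
    using compact_imp_bounded[OF compact_continuous_image[OF DcV cV]]
    by (auto simp: bounded_pos)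
  obtain R where R: "R > 0" "\<forall>z\<in>V. norm z \<le> R"
    using compact_imp_bounded[OF cV] by (auto simp: bounded_pos)
  obtain L where L: "L-lipschitz_on V b"
    using C1_lipschitz_compact[OF cV assms(7,8) bd assms(10)] by blast
  have ch: "continuous_on {0..1} h" by (rule AC_on_cont[OF ACh])
  have cs: "continuous_on {0..1} (\<lambda>t. sqrt (h t))" by (rule AC_on_cont[OF ACs])
  have cw: "continuous_on {0..1} w" by (rule AC_on_cont[OF ACw])
  obtain Ms where Ms: "Ms > 0" "\<forall>t\<in>{0..1}. \<bar>sqrt (h t)\<bar> \<le> Ms"
    using compact_imp_bounded[OF compact_continuous_image[OF cs compact_Icc]]
    by (auto simp: bounded_pos)
  have ACF: "AC_on 0 1 F"
  proof (rule AC_on_bound[OF ACh ACs ACw])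
    show "0 < Mb + L * Ms * R + L * Ms + 1"
      using Mb Ms R lipschitz_on_nonneg[OF L] by (simp add: add_pos_nonneg)
    fix x y :: real assume x: "x \<in> {0..1}" and y: "y \<in> {0..1}"
    show "norm (F x - F y) \<le> (Mb + L * Ms * R + L * Ms + 1) *
       (norm (h x - h y) + norm (sqrt (h x) - sqrt (h y)) + norm (w x - w y))"
      unfolding F_def w_def
      by (rule F_est) (use x y hnn hV Mb R L Ms in auto)
  qed
  define S where "S = {0<..<(1::real)} \<inter> h -` {0<..}"
  have oS: "open S" unfolding S_def
    by (rule continuous_open_preimage[OF continuous_on_subset[OF ch]]) auto
  have S01: "S \<subseteq> {0..1}" by (auto simp: S_def)
  have hS: "\<And>t. t \<in> S \<Longrightarrow> h t > 0" by (auto simp: S_def)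
  have gSV: "\<gamma> ` S \<subseteq> V" using hV S01 hS by blast
  have cgS: "continuous_on S \<gamma>"
  proof (rule continuous_on_eq)
    show "continuous_on S (\<lambda>t. inverse (sqrt (h t)) *\<^sub>R w t)"
      by (intro continuous_intros continuous_on_subset[OF ch S01] continuous_on_subset[OF cw S01]) (auto dest: hS)
    show "\<And>t. t \<in> S \<Longrightarrow> inverse (sqrt (h t)) *\<^sub>R w t = \<gamma> t"
      using hS by (force simp: w_def)
  qed
  have cbS: "continuous_on S (\<lambda>t. b (\<gamma> t))" by (rule continuous_on_compose2[OF bcV cgS gSV])
  have cDS: "continuous_on S (\<lambda>t. Db (\<gamma> t))" by (rule continuous_on_compose2[OF DcV cgS gSV])
  have csS: "continuous_on S (\<lambda>t. sqrt (h t))" by (rule continuous_on_subset[OF cs S01])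
  have Sb: "S \<in> sets borel" using oS by simp
  have m1: "(\<lambda>t. indicator S t * b (\<gamma> t)) \<in> borel_measurable borel"
    using borel_measurable_continuous_on_indicator[OF Sb cbS] by simp
  have m2: "(\<lambda>t. indicator S t *\<^sub>R (sqrt (h t) *\<^sub>R Db (\<gamma> t))) \<in> borel_measurable borel"
    by (rule borel_measurable_continuous_on_indicator[OF Sb]) (intro continuous_intros csS cDS)
  have m3: "(\<lambda>t. indicator S t * (sqrt (h t) * (Db (\<gamma> t) \<bullet> \<gamma> t))) \<in> borel_measurable borel"
    using borel_measurable_continuous_on_indicator[OF Sb, of "\<lambda>t. sqrt (h t) * (Db (\<gamma> t) \<bullet> \<gamma> t)"]
    by (simp add: continuous_intros csS cDS cgS)
  define G where "G = (\<lambda>t. if t \<in> S then gh t * b (\<gamma> t) + sqrt (h t) * (Db (\<gamma> t) \<bullet> (gw t - gs t *\<^sub>R \<gamma> t)) else 0)"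
  have Geq: "G = (\<lambda>t. gh t * (indicator S t * b (\<gamma> t)) + ((indicator S t *\<^sub>R (sqrt (h t) *\<^sub>R Db (\<gamma> t))) \<bullet> gw t
      - gs t * (indicator S t * (sqrt (h t) * (Db (\<gamma> t) \<bullet> \<gamma> t)))))"
    by (auto simp: G_def fun_eq_iff indicator_def inner_diff_right algebra_simps)
  have mG: "G \<in> borel_measurable borel"
    unfolding Geq using gh(1) gs(1) gw(1) m1 m2 m3 by measurable
  define K where "K = Mb + Ms * MD + Ms * MD * R"
  have K0: "0 \<le> K" using Mb Ms MD R by (simp add: K_def)
  have Gb: "\<bar>G t\<bar> \<le> K * (\<bar>gh t\<bar> + \<bar>gs t\<bar> + norm (gw t))" if t: "t \<in> {0..1}" for t
  proof (cases "t \<in> S")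
    case False then show ?thesis using K0 by (simp add: G_def)
  next
    case True
    have gV: "\<gamma> t \<in> V" using gSV True by blast
    have sM: "sqrt (h t) \<le> Ms" "0 \<le> sqrt (h t)" using Ms(2) t hnn by auto
    have nD: "norm (Db (\<gamma> t)) \<le> MD" using MD gV by blast
    have ng: "norm (\<gamma> t) \<le> R" using R gV by blast
    have "norm (gw t - gs t *\<^sub>R \<gamma> t) \<le> norm (gw t) + \<bar>gs t\<bar> * norm (\<gamma> t)"
      using norm_triangle_ineq4[of "gw t" "gs t *\<^sub>R \<gamma> t"] by simp
    also have "\<dots> \<le> norm (gw t) + \<bar>gs t\<bar> * R" using ng by (simp add: mult_left_mono)
    finally have nv: "norm (gw t - gs t *\<^sub>R \<gamma> t) \<le> norm (gw t) + \<bar>gs t\<bar> * R" .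
    have "\<bar>Db (\<gamma> t) \<bullet> (gw t - gs t *\<^sub>R \<gamma> t)\<bar> \<le> norm (Db (\<gamma> t)) * norm (gw t - gs t *\<^sub>R \<gamma> t)"
      by (rule Cauchy_Schwarz_ineq2)
    also have "\<dots> \<le> MD * (norm (gw t) + \<bar>gs t\<bar> * R)"
      using nD nv MD(1) by (intro mult_mono) auto
    finally have i1: "\<bar>Db (\<gamma> t) \<bullet> (gw t - gs t *\<^sub>R \<gamma> t)\<bar> \<le> MD * (norm (gw t) + \<bar>gs t\<bar> * R)" .
    have i2: "\<bar>sqrt (h t) * (Db (\<gamma> t) \<bullet> (gw t - gs t *\<^sub>R \<gamma> t))\<bar> \<le> Ms * (MD * (norm (gw t) + \<bar>gs t\<bar> * R))"
      unfolding abs_mult using sM i1 Ms(1) by (intro mult_mono) auto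
    have i3: "\<bar>gh t * b (\<gamma> t)\<bar> \<le> \<bar>gh t\<bar> * Mb"
      unfolding abs_mult using Mb gV by (intro mult_left_mono) auto
    have "\<bar>G t\<bar> \<le> \<bar>gh t\<bar> * Mb + Ms * (MD * (norm (gw t) + \<bar>gs t\<bar> * R))"
      using True i2 i3 by (simp add: G_def)
    also have "\<dots> = Mb * \<bar>gh t\<bar> + (Ms * MD * R) * \<bar>gs t\<bar> + (Ms * MD) * norm (gw t)"
      by (simp add: algebra_simps)
    also have "\<dots> \<le> K * \<bar>gh t\<bar> + K * \<bar>gs t\<bar> + K * norm (gw t)"
      using Mb Ms MD R by (intro add_mono mult_right_mono) (auto simp: K_def)
    also have "\<dots> = K * (\<bar>gh t\<bar> + \<bar>gs t\<bar> + norm (gw t))" by (simp add: algebra_simps)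
    finally show ?thesis .
  qed
  have G2: "(norm (G t))\<^sup>2 \<le> 3 * K\<^sup>2 * ((norm (gh t))\<^sup>2 + (norm (gs t))\<^sup>2 + (norm (gw t))\<^sup>2)"
    if t: "t \<in> {0..1}" for t
  proof -
    have "(norm (G t))\<^sup>2 \<le> (K * (\<bar>gh t\<bar> + \<bar>gs t\<bar> + norm (gw t)))\<^sup>2"
      using Gb[OF t] by (intro power_mono) auto
    also have "\<dots> = K\<^sup>2 * (\<bar>gh t\<bar> + \<bar>gs t\<bar> + norm (gw t))\<^sup>2" by (simp add: power_mult_distrib)
    also have "\<dots> \<le> K\<^sup>2 * (3 * ((\<bar>gh t\<bar>)\<^sup>2 + (\<bar>gs t\<bar>)\<^sup>2 + (norm (gw t))\<^sup>2))"
      by (intro mult_left_mono sq3) auto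
    finally show ?thesis by (simp add: algebra_simps)
  qed
  have intG: "integrable (restrict_space lborel {0..1}) (\<lambda>t. (norm (G t))\<^sup>2)"
  proof (rule Bochner_Integration.integrable_bound)
    show "integrable (restrict_space lborel {0..1})
      (\<lambda>t. 3 * K\<^sup>2 * ((norm (gh t))\<^sup>2 + (norm (gs t))\<^sup>2 + (norm (gw t))\<^sup>2))"
      using gh(2) gs(2) gw(2) by (intro Bochner_Integration.integrable_mult_right Bochner_Integration.integrable_add)
    show "(\<lambda>t. (norm (G t))\<^sup>2) \<in> borel_measurable (restrict_space lborel {0..1})"
      by (rule measurable_restrict_space1) (use mG in measurable)
    show "AE t in restrict_space lborel {0..1}. norm ((norm (G t))\<^sup>2)
       \<le> norm (3 * K\<^sup>2 * ((norm (gh t))\<^sup>2 + (norm (gs t))\<^sup>2 + (norm (gw t))\<^sup>2))"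
    proof (rule AE_I2)
      fix t :: real assume "t \<in> space (restrict_space lborel {0..1})"
      then have t: "t \<in> {0..1}" by (simp add: space_restrict_space)
      have "0 \<le> 3 * K\<^sup>2 * ((norm (gh t))\<^sup>2 + (norm (gs t))\<^sup>2 + (norm (gw t))\<^sup>2)" by simp
      then show "norm ((norm (G t))\<^sup>2) \<le> norm (3 * K\<^sup>2 * ((norm (gh t))\<^sup>2 + (norm (gs t))\<^sup>2 + (norm (gw t))\<^sup>2))"
        using G2[OF t] by simp
    qed
  qed
  have AEc: "AE t in lborel. t \<in> {0<..<1} \<longrightarrow> (h has_real_derivative gh t) (at t)
      \<and> ((\<lambda>t. sqrt (h t)) has_real_derivative gs t) (at t) \<and> (w has_vector_derivative gw t) (at t)"
    using gh(3) gs(3) gw(3) by eventually_elim (auto simp: has_real_derivative_iff_has_vector_derivative)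
  have PW: "(h t \<noteq> 0 \<longrightarrow> (\<gamma> has_vector_derivative ((1 / sqrt (h t)) *\<^sub>R (gw t - gs t *\<^sub>R \<gamma> t))) (at t))
    \<and> (F has_real_derivative
        (if h t = 0 then 0 else gh t * b (\<gamma> t) + sqrt (h t) * (Db (\<gamma> t) \<bullet> (gw t - gs t *\<^sub>R \<gamma> t)))) (at t)"
    if t: "t \<in> {0<..<1}" and d1: "(h has_real_derivative gh t) (at t)"
      and d2: "((\<lambda>t. sqrt (h t)) has_real_derivative gs t) (at t)"
      and d3: "(w has_vector_derivative gw t) (at t)" for t
    unfolding F_def
    by (rule pointwise_deriv[OF _ _ hnn hV assms(8) bd Mb(2) _ d1 d2 d3[unfolded w_def]])
      (use t Mb in auto)
  have GS: "G t = (if h t = 0 then 0 else gh t * b (\<gamma> t) + sqrt (h t) * (Db (\<gamma> t) \<bullet> (gw t - gs t *\<^sub>R \<gamma> t)))"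
    if t: "t \<in> {0<..<1}" for t
  proof -
    have "0 \<le> h t" using t hnn by auto
    then have "t \<in> S \<longleftrightarrow> h t \<noteq> 0" using t by (auto simp: S_def)
    then show ?thesis by (simp add: G_def)
  qed
  have part1: "AC2 F"
    unfolding AC2_def
  proof (intro conjI exI[of _ G])
    show "AC_on 0 1 F" by (rule ACF)
    show "G \<in> borel_measurable lborel" using mG by simp
    show "integrable (restrict_space lborel {0..1}) (\<lambda>t. (norm (G t))\<^sup>2)" by (rule intG)
    show "AE t in lborel. t \<in> {0<..<1} \<longrightarrow> (F has_vector_derivative G t) (at t)"
      using AEc
    proof eventually_elim
      case (elim t)
      show ?case
      proof
        assume t: "t \<in> {0<..<1}"
        then show "(F has_vector_derivative G t) (at t)"
          using PW[OF t] elim GS[OF t] by (simp add: has_real_derivative_iff_has_vector_derivative)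
      qed
    qed
  qed
  have part2: "AE t in lborel. t \<in> {0<..<1} \<longrightarrow>
         (\<exists>hd \<gamma>d. (h has_real_derivative hd) (at t) \<and>
            (h t \<noteq> 0 \<longrightarrow> (\<gamma> has_vector_derivative \<gamma>d) (at t)) \<and>
            (F has_real_derivative
               (if h t = 0 then 0 else hd * b (\<gamma> t) + h t * (Db (\<gamma> t) \<bullet> \<gamma>d))) (at t))"
    using AEc
  proof eventually_elim
    case (elim t)
    show ?case
    proof
      assume t: "t \<in> {0<..<1}"
      have P: "(h t \<noteq> 0 \<longrightarrow> (\<gamma> has_vector_derivative ((1 / sqrt (h t)) *\<^sub>R (gw t - gs t *\<^sub>R \<gamma> t))) (at t))
        \<and> (F has_real_derivative
        (if h t = 0 then 0 else gh t * b (\<gamma> t) + sqrt (h t) * (Db (\<gamma> t) \<bullet> (gw t - gs t *\<^sub>R \<gamma> t)))) (at t)"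
        using PW[OF t] elim t by blast
      have veq: "(if h t = 0 then 0 else gh t * b (\<gamma> t) + h t * (Db (\<gamma> t) \<bullet> ((1 / sqrt (h t)) *\<^sub>R (gw t - gs t *\<^sub>R \<gamma> t))))
        = (if h t = 0 then 0 else gh t * b (\<gamma> t) + sqrt (h t) * (Db (\<gamma> t) \<bullet> (gw t - gs t *\<^sub>R \<gamma> t)))"
      proof (cases "h t = 0")
        case False
        have "0 \<le> h t" using hnn t by auto
        then have hp: "h t > 0" using False by simp
        have "h t = sqrt (h t) * sqrt (h t)" using hp by simp
        then have "h t * (1 / sqrt (h t)) = sqrt (h t)" using hp by (metis nonzero_mult_div_cancel_right real_sqrt_gt_0_iff less_irrefl times_divide_eq_right mult_1_right)
        then show ?thesis using False by (simp add: inner_scaleR_right times_divide_eq_left[symmetric] mult.commute)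
      qed simp
      show "\<exists>hd \<gamma>d. (h has_real_derivative hd) (at t) \<and>
            (h t \<noteq> 0 \<longrightarrow> (\<gamma> has_vector_derivative \<gamma>d) (at t)) \<and>
            (F has_real_derivative
               (if h t = 0 then 0 else hd * b (\<gamma> t) + h t * (Db (\<gamma> t) \<bullet> \<gamma>d))) (at t)"
        using elim t P unfolding veq[symmetric] by blast
    qed
  qed
  show ?thesis using part1 part2 unfolding F_def by simp
qed

end
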